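(* For $d\ge1$ let $B_d=\{x\in\mathbb{R}^{d+1}:\|x\|_2\le1\}$. (i) There exist a Hilbert space $\mathcal{H}_{d}$ with inner product $\langle\cdot,\cdot\rangle_{\mathcal{H}_d}$ and a map $\phi_d:B_d\to\mathcal{H}_d$ such that $\mathrm{asin}(x^\top w)=\langle\phi_d(x),\phi_d(w)\rangle_{\mathcal{H}_d}$ for all $x,w\in B_d$. (ii) There exist a Hilbert space $\mathcal{H}'_{d}$, a map $\phi'_d:B_d\to\mathcal{H}'_d$, and an indefinite linear operator $M_d:\mathcal{H}'_d\to\mathcal{H}'_d$ with $M_d^\top M_d=\mathrm{Id}$ such that $\mathrm{asinh}(w^\top Hx)=\langle\phi'_d(w),M_d\,\phi'_d(Hx)\rangle_{\mathcal{H}'_d}$ for all $w,x\in B_d$.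
   Context: $H=\mathrm{diag}(-1,1,\dots,1)\in\mathbb{R}^{(d+1)\times(d+1)}$; $\mathrm{Id}$ is the identity operator; $M_d^\top$ denotes the adjoint of $M_d$. *)

theory Defs
  imports Complex_Main
begin

text \<open>Vectors of R^(d+1) are represented as functions nat => real with coordinates
  0..d (all other coordinates zero). Coordinate 0 is the one flipped by H.\<close>

definition vec_space :: "nat \<Rightarrow> (nat \<Rightarrow> real) set" where
  "vec_space d = {x. \<forall>i>d. x i = 0}"

definition dotp :: "nat \<Rightarrow> (nat \<Rightarrow> real) \<Rightarrow> (nat \<Rightarrow> real) \<Rightarrow> real" where
  "dotp d x w = (\<Sum>i\<le>d. x i * w i)"

definition unit_ball :: "nat \<Rightarrow> (nat \<Rightarrow> real) set" where
  "unit_ball d = {x \<in> vec_space d. sqrt (dotp d x x) \<le> 1}"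

definition Hmat :: "(nat \<Rightarrow> real) \<Rightarrow> (nat \<Rightarrow> real)" where
  "Hmat x = (\<lambda>i. if i = 0 then - x i else x i)"

definition l2 :: "(nat \<Rightarrow> real) set" where
  "l2 = {f. summable (\<lambda>i. (f i)\<^sup>2)}"

definition l2_inner :: "(nat \<Rightarrow> real) \<Rightarrow> (nat \<Rightarrow> real) \<Rightarrow> real" where
  "l2_inner f g = (\<Sum>i. f i * g i)"

definition l2_linear_op :: "((nat \<Rightarrow> real) \<Rightarrow> (nat \<Rightarrow> real)) \<Rightarrow> bool" where
  "l2_linear_op M \<longleftrightarrow> (\<forall>u\<in>l2. M u \<in> l2) \<and>
     (\<forall>u\<in>l2. \<forall>v\<in>l2. M (\<lambda>i. u i + v i) = (\<lambda>i. M u i + M v i)) \<and>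
     (\<forall>u\<in>l2. \<forall>c::real. M (\<lambda>i. c * u i) = (\<lambda>i. c * M u i))"

definition l2_adjoint :: "((nat \<Rightarrow> real) \<Rightarrow> (nat \<Rightarrow> real)) \<Rightarrow> ((nat \<Rightarrow> real) \<Rightarrow> (nat \<Rightarrow> real)) \<Rightarrow> bool" where
  "l2_adjoint Mt M \<longleftrightarrow> (\<forall>u\<in>l2. Mt u \<in> l2) \<and>
     (\<forall>u\<in>l2. \<forall>v\<in>l2. l2_inner (Mt u) v = l2_inner u (M v))"

definition l2_indefinite :: "((nat \<Rightarrow> real) \<Rightarrow> (nat \<Rightarrow> real)) \<Rightarrow> bool" where
  "l2_indefinite M \<longleftrightarrow> (\<exists>u\<in>l2. l2_inner u (M u) > 0) \<and> (\<exists>v\<in>l2. l2_inner v (M v) < 0)"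

end

theory Submission
  imports Defs "HOL-Analysis.Analysis"
begin

fun acoef :: "nat \<Rightarrow> real" where
  "acoef 0 = 1"
| "acoef (Suc k) = acoef k * (2 * real k + 1) / (2 * real k + 2)"

definition ccoef :: "nat \<Rightarrow> real" where
  "ccoef k = acoef k / (2 * real k + 1)"

lemma acoef_pos: "acoef k > 0"
  by (induction k) auto

lemma ccoef_pos: "ccoef k > 0"
  using acoef_pos by (simp add: ccoef_def)

lemma acoef_sq: "(acoef k)\<^sup>2 * (2 * real k + 1) \<le> 1"
proof (induction k)
  case 0 then show ?case by simp
next
  case (Suc k)
  have eq: "(acoef (Suc k))\<^sup>2 * (2 * real (Suc k) + 1)
      = ((acoef k)\<^sup>2 * (2 * real k + 1)) * ((2 * real k + 1) * (2 * real k + 3) / (2 * real k + 2)^2)"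
    by (simp add: power2_eq_square field_simps)
  have le: "(2 * real k + 1) * (2 * real k + 3) \<le> (2 * real k + 2)^2"
    by (simp add: power2_eq_square algebra_simps)
  have r1: "(2 * real k + 1) * (2 * real k + 3) / (2 * real k + 2)^2 \<le> 1"
    using le by (simp add: pos_divide_le_eq)
  have r0: "(2 * real k + 1) * (2 * real k + 3) / (2 * real k + 2)^2 \<ge> 0" by simp
  show ?case unfolding eq by (rule mult_le_one[OF Suc.IH r0 r1])
qed

lemma ccoef_bound: "ccoef k \<le> real (Suc k) powr (-3/2)"
proof -
  have p: "2 * real k + 1 > 0" by simp
  have a: "acoef k \<le> 1 / sqrt (2 * real k + 1)"
  proof -
    have "(acoef k)\<^sup>2 \<le> 1 / (2 * real k + 1)" using acoef_sq[of k] p by (simp add: field_simps)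
    hence "sqrt ((acoef k)\<^sup>2) \<le> sqrt (1 / (2 * real k + 1))" using real_sqrt_le_mono by blast
    thus ?thesis using acoef_pos[of k] by (simp add: real_sqrt_divide)
  qed
  have "ccoef k \<le> (1 / sqrt (2 * real k + 1)) / (2 * real k + 1)"
    unfolding ccoef_def using a p by (intro divide_right_mono) auto
  also have "\<dots> = 1 / ((2 * real k + 1) * sqrt (2 * real k + 1))"
    by simp
  also have "\<dots> = (2 * real k + 1) powr (-3/2)"
  proof -
    have e: "(3/2::real) = 1 + 1/2" by simp
    have "(2 * real k + 1) powr (3/2) = (2 * real k + 1) powr (1 + 1/2)" by (subst e) (rule refl)
    also have "\<dots> = (2 * real k + 1) powr 1 * (2 * real k + 1) powr (1/2)" by (rule powr_add)
    also have "\<dots> = (2 * real k + 1) * sqrt (2 * real k + 1)" using p by (simp add: powr_half_sqrt)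
    finally have e32: "(2 * real k + 1) powr (3/2) = (2 * real k + 1) * sqrt (2 * real k + 1)" .
    have m: "(-3/2::real) = - (3/2)" by simp
    have "(2 * real k + 1) powr (-3/2) = inverse ((2 * real k + 1) powr (3/2))"
      by (subst m) (rule powr_minus)
    thus ?thesis using e32 by (simp add: inverse_eq_divide)
  qed
  also have "\<dots> \<le> real (Suc k) powr (-3/2)"
    by (rule powr_mono2') auto
  finally show ?thesis .
qed

lemma summable_ccoef: "summable ccoef"
proof (rule summable_comparison_test[where g = "\<lambda>k. real (Suc k) powr (-3/2)"])
  show "\<exists>N. \<forall>n\<ge>N. norm (ccoef n) \<le> real (Suc n) powr (-3/2)"
    using ccoef_bound ccoef_pos by (auto simp: abs_of_pos)
  have "summable (\<lambda>n. real n powr (-3/2))" by (simp add: summable_real_powr_iff)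
  thus "summable (\<lambda>k. real (Suc k) powr (-3/2))"
    using summable_Suc_iff[of "\<lambda>n. real n powr (-3/2)"] by simp
qed

lemma gchoose_acoef: "((-1/2::real) gchoose k) = (-1)^k * acoef k"
proof (induction k)
  case 0 then show ?case by simp
next
  case (Suc k)
  have "((-1/2::real) gchoose Suc k) * fact (Suc k) = (\<Prod>i = 0..<Suc k. (-1/2) - of_nat i)"
    by (rule gbinomial_mult_fact')
  also have "\<dots> = ((-1/2::real) gchoose k) * fact k * ((-1/2) - of_nat k)"
    by (simp add: gbinomial_mult_fact')
  finally have "((-1/2::real) gchoose Suc k) * (real k + 1) * fact k = (((-1/2::real) gchoose k) * ((-1/2) - of_nat k)) * fact k"
    by (simp add: algebra_simps)
  hence "((-1/2::real) gchoose Suc k) * (real k + 1) = ((-1/2::real) gchoose k) * ((-1/2) - of_nat k)"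
    by simp
  hence "((-1/2::real) gchoose Suc k) = ((-1/2::real) gchoose k) * ((-1/2) - of_nat k) / (real k + 1)"
    by (simp add: field_simps)
  then show ?case using Suc by (simp add: field_simps)
qed

definition bco :: "real \<Rightarrow> nat \<Rightarrow> real" where
  "bco s n = (if odd n then s ^ (n div 2) * ccoef (n div 2) else 0)"

definition ser :: "real \<Rightarrow> real \<Rightarrow> real" where
  "ser s t = (\<Sum>n. bco s n * t ^ n)"

lemma strict_mono_odd: "strict_mono (\<lambda>k::nat. 2 * k + 1)"
  by (auto simp: strict_mono_def)

lemma strict_mono_even: "strict_mono (\<lambda>k::nat. 2 * k)"
  by (auto simp: strict_mono_def)

lemma odd_in_range: "odd (n::nat) \<Longrightarrow> n \<in> range (\<lambda>k. 2 * k + 1)"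
  by (metis odd_two_times_div_two_succ rangeI)

lemma even_in_range: "even (n::nat) \<Longrightarrow> n \<in> range (\<lambda>k. 2 * k)"
  by (metis dvd_mult_div_cancel rangeI)

lemma abs_bco: "\<bar>s\<bar> = 1 \<Longrightarrow> \<bar>bco s n\<bar> = (if odd n then ccoef (n div 2) else 0)"
  using ccoef_pos by (simp add: bco_def abs_mult power_abs abs_of_pos)

lemma summable_abs_bco:
  assumes "\<bar>s\<bar> = 1" shows "summable (\<lambda>n. \<bar>bco s n\<bar>)"
proof -
  have "(\<lambda>k. (\<lambda>n. if odd n then ccoef (n div 2) else 0) (2 * k + 1)) sums (suminf ccoef)"
    using summable_ccoef by (simp add: summable_sums)
  hence "(\<lambda>n. if odd n then ccoef (n div 2) else 0) sums (suminf ccoef)"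
    by (subst (asm) sums_mono_reindex[OF strict_mono_odd]) (auto dest: odd_in_range)
  thus ?thesis using abs_bco[OF assms] by (simp add: sums_iff)
qed

lemma ser_sums:
  assumes "\<bar>s\<bar> = 1" "\<bar>t\<bar> \<le> 1"
  shows "(\<lambda>n. bco s n * t ^ n) sums ser s t"
proof -
  have "summable (\<lambda>n. norm (bco s n * t ^ n))"
  proof (rule summable_comparison_test[OF _ summable_abs_bco[OF assms(1)]])
    show "\<exists>N. \<forall>n\<ge>N. norm (norm (bco s n * t ^ n)) \<le> \<bar>bco s n\<bar>"
      using assms(2) by (auto simp: abs_mult power_abs intro!: mult_left_le power_le_one)
  qed
  hence "summable (\<lambda>n. bco s n * t ^ n)" by (rule summable_norm_cancel)
  thus ?thesis by (simp add: ser_def summable_sums)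
qed

lemma ser_odd_sums:
  assumes "\<bar>s\<bar> = 1" "\<bar>t\<bar> \<le> 1"
  shows "(\<lambda>k. s ^ k * ccoef k * t ^ (2 * k + 1)) sums ser s t"
proof -
  have "(\<lambda>n. bco s n * t ^ n) sums ser s t" by (rule ser_sums[OF assms])
  hence "(\<lambda>k. (\<lambda>n. bco s n * t ^ n) (2 * k + 1)) sums ser s t"
    by (subst sums_mono_reindex[OF strict_mono_odd]) (auto simp: bco_def dest: odd_in_range)
  thus ?thesis by (simp add: bco_def)
qed

lemma ser_cont:
  assumes "\<bar>s\<bar> = 1"
  shows "continuous_on {-1..1} (ser s)"
proof -
  have "uniform_limit {-1..1} (\<lambda>n t. \<Sum>i<n. bco s i * t ^ i) (\<lambda>t. suminf (\<lambda>i. bco s i * t ^ i)) sequentially"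
    by (rule Weierstrass_m_test[OF _ summable_abs_bco[OF assms]])
       (auto simp: abs_mult power_abs intro!: mult_left_le power_le_one)
  hence "uniform_limit {-1..1} (\<lambda>n t. \<Sum>i<n. bco s i * t ^ i) (ser s) sequentially"
    by (simp add: ser_def[abs_def])
  thus ?thesis
    by (rule uniform_limit_theorem[rotated]) (auto intro!: always_eventually continuous_intros)
qed

lemma ser_deriv:
  assumes "\<bar>s\<bar> = 1" "\<bar>t\<bar> < 1"
  shows "DERIV (ser s) t :> (1 - s * t\<^sup>2) powr (-1/2)"
proof -
  have sm: "summable (\<lambda>n. bco s n * 1 ^ n)"
    using summable_abs_bco[OF assms(1)] by (simp add: summable_rabs_cancel)
  have D: "DERIV (\<lambda>x. \<Sum>n. bco s n * x ^ n) t :> (\<Sum>n. diffs (bco s) n * t ^ n)"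
    by (rule termdiffs_strong[OF sm]) (use assms in simp)
  have t2: "t\<^sup>2 < 1" by (rule abs_square_less_1[THEN iffD2, OF assms(2)])
  have "\<bar>- (s * t\<^sup>2)\<bar> = t\<^sup>2" using assms(1) by (simp add: abs_mult)
  hence z: "\<bar>- (s * t\<^sup>2)\<bar> < 1" using t2 by simp
  have "(\<lambda>k. ((-1/2::real) gchoose k) * (- (s * t\<^sup>2)) ^ k) sums (1 + - (s * t\<^sup>2)) powr (-1/2)"
    by (rule gen_binomial_real[OF z])
  moreover have "((-1/2::real) gchoose k) * (- (s * t\<^sup>2)) ^ k = (\<lambda>n. diffs (bco s) n * t ^ n) (2 * k)" for k
  proof -
    have e1: "(- (s * t\<^sup>2)) ^ k = (-1)^k * (s ^ k * t ^ (2 * k))"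
      by (subst power_minus) (simp only: power_mult_distrib power_mult)
    have e2: "(-1::real) ^ k * (-1) ^ k = 1"
      by (simp only: power_mult_distrib[symmetric]) simp
    have "((-1/2::real) gchoose k) * (- (s * t\<^sup>2)) ^ k = ((-1)^k * (-1)^k) * (acoef k * s ^ k * t ^ (2 * k))"
      by (simp only: gchoose_acoef e1 mult_ac)
    also have "\<dots> = acoef k * s ^ k * t ^ (2 * k)"
      by (simp only: e2 mult_1)
    also have "\<dots> = (\<lambda>n. diffs (bco s) n * t ^ n) (2 * k)"
    proof -
      have nz: "2 * real k + 1 \<noteq> 0" by simp
      have b: "bco s (Suc (2 * k)) = s ^ k * ccoef k" by (simp add: bco_def)
      have c: "real (Suc (2 * k)) * ccoef k = acoef k"
      proof -
        have "real (Suc (2 * k)) = 2 * real k + 1" by simp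
        thus ?thesis unfolding ccoef_def by (simp only: nonzero_mult_div_cancel_left[OF nz] times_divide_eq_right)
      qed
      have "diffs (bco s) (2 * k) * t ^ (2 * k) = real (Suc (2 * k)) * (s ^ k * ccoef k) * t ^ (2 * k)"
        by (simp only: diffs_def b)
      also have "\<dots> = (real (Suc (2 * k)) * ccoef k) * s ^ k * t ^ (2 * k)"
        by (simp only: mult_ac)
      finally show ?thesis by (simp only: c)
    qed
    finally show ?thesis .
  qed
  ultimately have "(\<lambda>k. (\<lambda>n. diffs (bco s) n * t ^ n) (2 * k)) sums (1 - s * t\<^sup>2) powr (-1/2)"
    by simp
  hence "(\<lambda>n. diffs (bco s) n * t ^ n) sums (1 - s * t\<^sup>2) powr (-1/2)"
    by (subst (asm) sums_mono_reindex[OF strict_mono_even])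
       (auto simp: diffs_def bco_def dest: even_in_range)
  thus ?thesis using D by (simp add: ser_def[abs_def] sums_iff)
qed

lemma ser_zero: "ser s 0 = 0"
  by (simp add: ser_def bco_def)

lemma neg_half: "(-1/2::real) = - (1/2)" by simp

lemma eq_ser:
  fixes f :: "real \<Rightarrow> real"
  assumes s: "\<bar>s\<bar> = 1"
    and cf: "continuous_on {-1..1} f" and f0: "f 0 = 0"
    and df: "\<And>t. -1 < t \<Longrightarrow> t < 1 \<Longrightarrow> DERIV f t :> (1 - s * t\<^sup>2) powr (-1/2)"
    and t: "\<bar>t\<bar> \<le> 1"
  shows "f t = ser s t"
proof -
  let ?h = "\<lambda>t. f t - ser s t"
  have c: "continuous_on {-1..1} ?h"
    by (intro continuous_intros cf ser_cont[OF s])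
  have d: "DERIV ?h x :> 0" if "-1 < x" "x < 1" for x
    using DERIV_diff[OF df[OF that] ser_deriv[OF s, of x]] that by simp
  have "?h t = ?h (-1)"
    by (rule DERIV_isconst2[OF _ c d]) (use t in auto)
  moreover have "?h 0 = ?h (-1)"
    by (rule DERIV_isconst2[OF _ c d]) auto
  ultimately show ?thesis using f0 ser_zero by simp
qed

lemma arcsin_ser: "\<bar>t\<bar> \<le> 1 \<Longrightarrow> arcsin t = ser 1 t"
proof (rule eq_ser[where f = arcsin])
  fix t :: real assume "-1 < t" "t < 1"
  hence p: "1 - t\<^sup>2 > 0" by (simp add: abs_square_less_1)
  have "(1 - 1 * t\<^sup>2) powr (-1/2) = inverse (sqrt (1 - t\<^sup>2))"
    using p by (simp only: neg_half powr_minus) (simp add: powr_half_sqrt)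
  thus "DERIV arcsin t :> (1 - 1 * t\<^sup>2) powr (-1/2)"
    using DERIV_arcsin[OF \<open>-1 < t\<close> \<open>t < 1\<close>] by simp
qed (auto simp: continuous_on_arcsin')

lemma arsinh_ser: "\<bar>t\<bar> \<le> 1 \<Longrightarrow> arsinh t = ser (-1) t"
proof (rule eq_ser[where f = arsinh])
  fix t :: real
  have p: "1 + t\<^sup>2 > 0" by (simp add: add_pos_nonneg)
  have q: "1 - (-1) * t\<^sup>2 = t\<^sup>2 + 1" by simp
  have "(1 - (-1) * t\<^sup>2) powr (-1/2) = inverse ((t\<^sup>2 + 1) powr (1/2))"
    by (simp only: q neg_half powr_minus)
  also have "\<dots> = 1 / sqrt (t\<^sup>2 + 1)"
    using p by (simp add: powr_half_sqrt inverse_eq_divide)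
  finally have "(1 - (-1) * t\<^sup>2) powr (-1/2) = 1 / sqrt (t\<^sup>2 + 1)" .
  thus "DERIV arsinh t :> (1 - (-1) * t\<^sup>2) powr (-1/2)"
    using arsinh_real_has_field_derivative[of t UNIV] by simp
qed (auto intro: continuous_on_arsinh)



definition Lset :: "nat \<Rightarrow> nat \<Rightarrow> nat list set" where
  "Lset d n = {is. length is = n \<and> set is \<subseteq> {..d}}"

lemma finite_Lset: "finite (Lset d n)"
proof -
  have "finite {xs. set xs \<subseteq> {..d} \<and> length xs = n}"
    by (rule finite_lists_length_eq) simp
  thus ?thesis unfolding Lset_def by (simp add: conj_commute)
qed

lemma Lset_Suc: "Lset d (Suc n) = (\<lambda>(i, l). i # l) ` ({..d} \<times> Lset d n)"
proof (rule set_eqI)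
  fix xs show "xs \<in> Lset d (Suc n) \<longleftrightarrow> xs \<in> (\<lambda>(i, l). i # l) ` ({..d} \<times> Lset d n)"
    by (cases xs) (auto simp: Lset_def image_iff)
qed

lemma sum_Lset: "(\<Sum>is\<in>Lset d n. prod_list (map (f :: nat \<Rightarrow> real) is)) = (\<Sum>i\<le>d. f i) ^ n"
proof (induction n)
  case 0
  have "Lset d 0 = {[]}" by (auto simp: Lset_def)
  then show ?case by simp
next
  case (Suc n)
  have inj: "inj_on (\<lambda>(i, l). i # l) ({..d} \<times> Lset d n)" by (auto simp: inj_on_def)
  have "(\<Sum>is\<in>Lset d (Suc n). prod_list (map f is))
      = (\<Sum>p\<in>{..d} \<times> Lset d n. prod_list (map f ((\<lambda>(i, l). i # l) p)))"
    unfolding Lset_Suc by (rule sum.reindex[OF inj, unfolded comp_def])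
  also have "\<dots> = (\<Sum>p\<in>{..d} \<times> Lset d n. f (fst p) * prod_list (map f (snd p)))"
    by (intro sum.cong) auto
  also have "\<dots> = (\<Sum>i\<le>d. \<Sum>l\<in>Lset d n. f i * prod_list (map f l))"
    by (simp add: sum.cartesian_product split_def)
  also have "\<dots> = (\<Sum>i\<le>d. f i) * (\<Sum>l\<in>Lset d n. prod_list (map f l))"
    by (simp only: sum_distrib_right) (simp only: sum_distrib_left)
  finally show ?case using Suc by simp
qed

lemma prod_list_map_mult: "prod_list (map (x :: nat \<Rightarrow> real) is) * prod_list (map w is) = prod_list (map (\<lambda>i. x i * w i) is)"
proof (induction "is")
  case Nil show ?case by simp
next
  case (Cons a l)
  have "prod_list (map x (a # l)) * prod_list (map w (a # l)) = (x a * w a) * (prod_list (map x l) * prod_list (map w l))"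
    by (simp only: list.map prod_list.Cons mult_ac)
  then show ?case using Cons by simp
qed

lemma prod_list_map_abs: "\<bar>prod_list (map (f :: nat \<Rightarrow> real) is)\<bar> = prod_list (map (\<lambda>i. \<bar>f i\<bar>) is)"
proof (induction "is")
  case Nil show ?case by simp
next
  case (Cons a l)
  have "\<bar>prod_list (map f (a # l))\<bar> = \<bar>f a\<bar> * \<bar>prod_list (map f l)\<bar>"
    by (simp add: abs_mult)
  then show ?case using Cons by simp
qed

definition feat :: "nat \<Rightarrow> (nat \<Rightarrow> real) \<Rightarrow> nat \<times> nat list \<Rightarrow> real" where
  "feat d x p = (if snd p \<in> Lset d (2 * fst p + 1) then sqrt (ccoef (fst p)) * prod_list (map x (snd p)) else 0)"

lemma feat_prod:
  "s ^ fst p * feat d x p * feat d w p =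
     (if snd p \<in> Lset d (2 * fst p + 1) then s ^ fst p * ccoef (fst p) * prod_list (map (\<lambda>i. x i * w i) (snd p)) else 0)"
  using ccoef_pos[of "fst p"]
  by (auto simp: feat_def prod_list_map_mult[symmetric] mult_ac less_imp_le)

lemma core_has_sum:
  assumes s: "\<bar>s\<bar> = 1" and b: "(\<Sum>i\<le>d. \<bar>x i * w i\<bar>) \<le> 1"
  shows "((\<lambda>p. s ^ fst p * feat d x p * feat d w p) has_sum ser s (dotp d x w)) UNIV"
proof -
  define G where "G = (\<lambda>p. s ^ fst p * feat d x p * feat d w p)"
  define B where "B = (\<lambda>k. Lset d (2 * k + 1))"
  define g where "g = (\<lambda>k. s ^ k * ccoef k * dotp d x w ^ (2 * k + 1))"
  have Gk: "G (k, l) = (if l \<in> B k then s ^ k * ccoef k * prod_list (map (\<lambda>i. x i * w i) l) else 0)" for k l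
    unfolding G_def B_def by (subst feat_prod) simp
  have t: "\<bar>dotp d x w\<bar> \<le> 1"
    unfolding dotp_def by (rule order_trans[OF sum_abs b])
  have fib: "((\<lambda>l. G (k, l)) has_sum g k) (B k)" for k
  proof (rule has_sum_finiteI)
    show "finite (B k)" by (simp add: B_def finite_Lset)
    have "sum (\<lambda>l. G (k, l)) (B k) = (\<Sum>l\<in>B k. s ^ k * ccoef k * prod_list (map (\<lambda>i. x i * w i) l))"
      by (intro sum.cong) (auto simp: Gk)
    also have "\<dots> = s ^ k * ccoef k * (\<Sum>i\<le>d. x i * w i) ^ (2 * k + 1)"
      by (simp add: sum_distrib_left[symmetric] B_def sum_Lset)
    finally show "g k = sum (\<lambda>l. G (k, l)) (B k)" by (simp add: g_def dotp_def)
  qed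
  have gs: "(g has_sum ser s (dotp d x w)) UNIV"
  proof (rule norm_summable_imp_has_sum)
    show "g sums ser s (dotp d x w)" unfolding g_def by (rule ser_odd_sums[OF s t])
    show "summable (\<lambda>n. norm (g n))"
    proof (rule summable_comparison_test[OF _ summable_ccoef])
      have "norm (norm (g n)) \<le> ccoef n" for n
      proof -
        have "norm (norm (g n)) = ccoef n * \<bar>dotp d x w\<bar> ^ (2 * n + 1)"
          using s ccoef_pos[of n] by (simp add: g_def abs_mult power_abs abs_of_pos)
        also have "\<dots> \<le> ccoef n"
          using t ccoef_pos[of n] by (intro mult_left_le power_le_one) auto
        finally show ?thesis .
      qed
      thus "\<exists>N. \<forall>n\<ge>N. norm (norm (g n)) \<le> ccoef n" by blast
    qed
  qed
  have nfib: "infsum (\<lambda>l. norm (G (k, l))) (B k) \<le> ccoef k" for k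
  proof -
    have "infsum (\<lambda>l. norm (G (k, l))) (B k) = (\<Sum>l\<in>B k. norm (G (k, l)))"
      by (simp add: B_def finite_Lset)
    also have "\<dots> = (\<Sum>l\<in>B k. ccoef k * prod_list (map (\<lambda>i. \<bar>x i * w i\<bar>) l))"
      using s ccoef_pos[of k]
      by (intro sum.cong) (auto simp: Gk abs_mult power_abs abs_of_pos prod_list_map_abs[of "\<lambda>i. x i * w i"])
    also have "\<dots> = ccoef k * (\<Sum>i\<le>d. \<bar>x i * w i\<bar>) ^ (2 * k + 1)"
      by (simp add: sum_distrib_left[symmetric] B_def sum_Lset)
    also have "\<dots> \<le> ccoef k * 1"
      using b ccoef_pos[of k] by (intro mult_left_mono power_le_one) (auto intro: sum_nonneg)
    finally show ?thesis by simp
  qed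
  have "(\<lambda>p. norm (G p)) summable_on Sigma UNIV B"
  proof (rule Infinite_Sum.abs_summable_on_Sigma_iff[THEN iffD2], intro conjI ballI)
    show "(\<lambda>l. norm (G (k, l))) summable_on B k" for k
      by (simp add: B_def finite_Lset)
    show "(\<lambda>k. norm (infsum (\<lambda>l. norm (G (k, l))) (B k))) summable_on UNIV"
    proof (rule norm_summable_imp_summable_on)
      show "summable (\<lambda>n. norm (norm (infsum (\<lambda>l. norm (G (n, l))) (B n))))"
      proof (rule summable_comparison_test[OF _ summable_ccoef])
        have "norm (norm (norm (infsum (\<lambda>l. norm (G (n, l))) (B n)))) \<le> ccoef n" for n
        proof -
          have "infsum (\<lambda>l. norm (G (n, l))) (B n) \<ge> 0" by (rule infsum_nonneg) simp
          thus ?thesis using nfib[of n] by simp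
        qed
        thus "\<exists>N. \<forall>n\<ge>N. norm (norm (norm (infsum (\<lambda>l. norm (G (n, l))) (B n)))) \<le> ccoef n"
          by blast
      qed
    qed
  qed
  hence SG: "G summable_on Sigma UNIV B" by (rule summable_on_iff_abs_summable_on_real[THEN iffD2])
  have HS: "(G has_sum ser s (dotp d x w)) (Sigma UNIV B)"
    by (rule has_sum_SigmaI[where f=G and g=g and A=UNIV and B=B, OF fib gs SG])
  have z: "G p = 0" if "p \<notin> Sigma UNIV B" for p
  proof -
    obtain k l where p: "p = (k, l)" by (cases p)
    have "l \<notin> B k" using that p by simp
    thus ?thesis unfolding p Gk by simp
  qed
  have "(G has_sum ser s (dotp d x w)) UNIV"
    by (rule has_sum_cong_neutral[where f=G and g=G and S="Sigma UNIV B" and T=UNIV, THEN iffD1, OF _ _ _ HS])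
       (use z in auto)
  thus ?thesis by (simp add: G_def)
qed

definition enum :: "nat \<Rightarrow> nat \<times> nat list" where
  "enum = from_nat_into (UNIV :: (nat \<times> nat list) set)"

lemma bij_enum: "bij_betw enum UNIV UNIV"
proof -
  have "countable (UNIV :: (nat \<times> nat list) set)" by simp
  moreover have "infinite (UNIV :: (nat \<times> nat list) set)" by (simp add: finite_prod)
  ultimately show ?thesis unfolding enum_def by (rule bij_betw_from_nat_into)
qed

definition phi :: "nat \<Rightarrow> (nat \<Rightarrow> real) \<Rightarrow> nat \<Rightarrow> real" where
  "phi d x = (\<lambda>n. feat d x (enum n))"

definition Mop :: "(nat \<Rightarrow> real) \<Rightarrow> nat \<Rightarrow> real" where
  "Mop u = (\<lambda>n. (-1) ^ fst (enum n) * u n)"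

lemma core_sums:
  assumes s: "\<bar>s\<bar> = 1" and b: "(\<Sum>i\<le>d. \<bar>x i * w i\<bar>) \<le> 1"
  shows "(\<lambda>n. phi d x n * (s ^ fst (enum n) * phi d w n)) sums ser s (dotp d x w)"
proof -
  have "((\<lambda>n. (\<lambda>p. s ^ fst p * feat d x p * feat d w p) (enum n)) has_sum ser s (dotp d x w)) UNIV"
    by (rule has_sum_reindex_bij_betw[OF bij_enum, where f = "\<lambda>p. s ^ fst p * feat d x p * feat d w p", THEN iffD2])
       (rule core_has_sum[OF s b])
  hence "(\<lambda>n. (\<lambda>p. s ^ fst p * feat d x p * feat d w p) (enum n)) sums ser s (dotp d x w)"
    by (rule has_sum_imp_sums)
  thus ?thesis by (simp add: phi_def mult_ac)
qed

lemma abs_prod_le: "\<bar>a * b\<bar> \<le> (a * a + b * b) / (2::real)"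
proof -
  have "0 \<le> (\<bar>a\<bar> - \<bar>b\<bar>) * (\<bar>a\<bar> - \<bar>b\<bar>)" by simp
  hence "2 * (\<bar>a\<bar> * \<bar>b\<bar>) \<le> \<bar>a\<bar> * \<bar>a\<bar> + \<bar>b\<bar> * \<bar>b\<bar>" by (simp add: algebra_simps)
  thus ?thesis by (simp add: abs_mult)
qed

lemma ball_dot: "x \<in> unit_ball d \<Longrightarrow> dotp d x x \<le> 1"
  unfolding unit_ball_def by simp

lemma ball_bound:
  assumes "x \<in> unit_ball d" "w \<in> unit_ball d"
  shows "(\<Sum>i\<le>d. \<bar>x i * w i\<bar>) \<le> 1"
proof -
  have "(\<Sum>i\<le>d. \<bar>x i * w i\<bar>) \<le> (\<Sum>i\<le>d. (x i * x i + w i * w i) / 2)"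
    by (rule sum_mono) (rule abs_prod_le)
  also have "\<dots> = (dotp d x x + dotp d w w) / 2"
    by (simp only: dotp_def sum.distrib[symmetric] sum_divide_distrib)
  also have "\<dots> \<le> 1" using ball_dot[OF assms(1)] ball_dot[OF assms(2)] by simp
  finally show ?thesis .
qed

lemma dot_bound:
  assumes "x \<in> unit_ball d" "w \<in> unit_ball d"
  shows "\<bar>dotp d x w\<bar> \<le> 1"
  unfolding dotp_def by (rule order_trans[OF sum_abs ball_bound[OF assms]])

lemma Hmat_ball: "x \<in> unit_ball d \<Longrightarrow> Hmat x \<in> unit_ball d"
proof -
  assume x: "x \<in> unit_ball d"
  have "dotp d (Hmat x) (Hmat x) = dotp d x x"
    unfolding dotp_def Hmat_def by (intro sum.cong) auto
  moreover have "Hmat x \<in> vec_space d"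
    using x by (auto simp: unit_ball_def vec_space_def Hmat_def)
  ultimately show ?thesis using x by (simp add: unit_ball_def)
qed

lemma m1_sq: "(-1::real) ^ k * (-1) ^ k = 1"
  by (simp only: power_mult_distrib[symmetric]) simp

lemma phi_l2:
  assumes "x \<in> unit_ball d" shows "phi d x \<in> l2"
proof -
  have "(\<lambda>n. phi d x n * (1 ^ fst (enum n) * phi d x n)) sums ser 1 (dotp d x x)"
    by (rule core_sums) (use ball_bound[OF assms assms] in auto)
  hence "summable (\<lambda>n. phi d x n * (1 ^ fst (enum n) * phi d x n))" by (rule sums_summable)
  thus ?thesis by (simp add: l2_def power2_eq_square)
qed

lemma Mop_l2: "u \<in> l2 \<Longrightarrow> Mop u \<in> l2"
proof -
  assume "u \<in> l2"
  moreover have "(Mop u n)\<^sup>2 = (u n)\<^sup>2" for n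
  proof -
    have "(Mop u n)\<^sup>2 = ((-1) ^ fst (enum n) * (-1) ^ fst (enum n)) * (u n)\<^sup>2"
      by (simp add: Mop_def power2_eq_square mult_ac)
    thus ?thesis by (simp only: m1_sq mult_1)
  qed
  ultimately show ?thesis by (simp add: l2_def)
qed

lemma Mop_Mop: "Mop (Mop u) = u"
proof
  fix n
  have "Mop (Mop u) n = ((-1) ^ fst (enum n) * (-1) ^ fst (enum n)) * u n"
    by (simp add: Mop_def mult_ac)
  thus "Mop (Mop u) n = u n" by (simp only: m1_sq mult_1)
qed

lemma single_l2: "(\<lambda>n. if n = n0 then 1 else 0 :: real) \<in> l2"
proof -
  have "(\<lambda>i. ((\<lambda>n. if n = n0 then 1 else 0 :: real) i)\<^sup>2) = (\<lambda>i. if i = n0 then 1 else 0)"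
    by auto
  thus ?thesis unfolding l2_def by simp
qed

lemma single_inner: "l2_inner (\<lambda>n. if n = n0 then 1 else 0) (Mop (\<lambda>n. if n = n0 then 1 else 0)) = (-1) ^ fst (enum n0)"
proof -
  have "(\<lambda>n. (if n = n0 then 1 else 0) * Mop (\<lambda>n. if n = n0 then 1 else 0) n) = (\<lambda>n. if n = n0 then (-1::real) ^ fst (enum n) else 0)"
    by (auto simp: Mop_def)
  thus ?thesis unfolding l2_inner_def using sums_single[of n0 "\<lambda>n. (-1::real) ^ fst (enum n)"]
    by (simp add: sums_iff)
qed

theorem lemma1:
  fixes d :: nat
  assumes "d \<ge> 1"
  shows "(\<exists>\<phi>. (\<forall>x\<in>unit_ball d. \<phi> x \<in> l2) \<and>
            (\<forall>x\<in>unit_ball d. \<forall>w\<in>unit_ball d.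
               arcsin (dotp d x w) = l2_inner (\<phi> x) (\<phi> w)))
       \<and> (\<exists>\<phi>' M Mt. (\<forall>x\<in>unit_ball d. \<phi>' x \<in> l2) \<and>
            l2_linear_op M \<and> l2_indefinite M \<and>
            l2_adjoint Mt M \<and> (\<forall>u\<in>l2. Mt (M u) = u) \<and>
            (\<forall>w\<in>unit_ball d. \<forall>x\<in>unit_ball d.
               arsinh (dotp d w (Hmat x)) = l2_inner (\<phi>' w) (M (\<phi>' (Hmat x)))))"
proof (intro conjI)
  show "\<exists>\<phi>. (\<forall>x\<in>unit_ball d. \<phi> x \<in> l2) \<and>
            (\<forall>x\<in>unit_ball d. \<forall>w\<in>unit_ball d.
               arcsin (dotp d x w) = l2_inner (\<phi> x) (\<phi> w))"
  proof (intro exI conjI ballI)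
    fix x assume "x \<in> unit_ball d" thus "phi d x \<in> l2" by (rule phi_l2)
  next
    fix x w assume x: "x \<in> unit_ball d" and w: "w \<in> unit_ball d"
    have "(\<lambda>n. phi d x n * (1 ^ fst (enum n) * phi d w n)) sums ser 1 (dotp d x w)"
      by (rule core_sums) (use ball_bound[OF x w] in auto)
    hence "(\<lambda>n. phi d x n * phi d w n) sums ser 1 (dotp d x w)" by simp
    hence "l2_inner (phi d x) (phi d w) = ser 1 (dotp d x w)"
      unfolding l2_inner_def by (simp add: sums_iff)
    also have "\<dots> = arcsin (dotp d x w)"
      by (rule arcsin_ser[symmetric]) (rule dot_bound[OF x w])
    finally show "arcsin (dotp d x w) = l2_inner (phi d x) (phi d w)" by simp
  qed
  obtain n0 where n0: "enum n0 = (0, [0])" using bij_enum by (metis bij_betw_imp_surj_on rangeE UNIV_I)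
  obtain n1 where n1: "enum n1 = (1, [0])" using bij_enum by (metis bij_betw_imp_surj_on rangeE UNIV_I)
  have lin: "l2_linear_op Mop"
  proof -
    have "\<forall>u\<in>l2. Mop u \<in> l2" using Mop_l2 by blast
    moreover have "\<forall>u\<in>l2. \<forall>v\<in>l2. Mop (\<lambda>i. u i + v i) = (\<lambda>i. Mop u i + Mop v i)"
      by (simp add: Mop_def algebra_simps)
    moreover have "\<forall>u\<in>l2. \<forall>c::real. Mop (\<lambda>i. c * u i) = (\<lambda>i. c * Mop u i)"
      by (simp add: Mop_def algebra_simps)
    ultimately show ?thesis unfolding l2_linear_op_def by blast
  qed
  have ind: "l2_indefinite Mop"
    unfolding l2_indefinite_def
  proof (intro conjI bexI)
    show "l2_inner (\<lambda>n. if n = n0 then 1 else 0) (Mop (\<lambda>n. if n = n0 then 1 else 0)) > 0"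
      by (simp add: single_inner n0)
    show "l2_inner (\<lambda>n. if n = n1 then 1 else 0) (Mop (\<lambda>n. if n = n1 then 1 else 0)) < 0"
      by (simp add: single_inner n1)
  qed (rule single_l2)+
  have adj: "l2_adjoint Mop Mop"
  proof -
    have "\<forall>u\<in>l2. Mop u \<in> l2" using Mop_l2 by blast
    moreover have "\<forall>u\<in>l2. \<forall>v\<in>l2. l2_inner (Mop u) v = l2_inner u (Mop v)"
      by (simp add: l2_inner_def Mop_def mult_ac)
    ultimately show ?thesis unfolding l2_adjoint_def by blast
  qed
  show "\<exists>\<phi>' M Mt. (\<forall>x\<in>unit_ball d. \<phi>' x \<in> l2) \<and>
            l2_linear_op M \<and> l2_indefinite M \<and>
            l2_adjoint Mt M \<and> (\<forall>u\<in>l2. Mt (M u) = u) \<and>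
            (\<forall>w\<in>unit_ball d. \<forall>x\<in>unit_ball d.
               arsinh (dotp d w (Hmat x)) = l2_inner (\<phi>' w) (M (\<phi>' (Hmat x))))"
  proof (intro exI conjI ballI)
    fix x assume "x \<in> unit_ball d" thus "phi d x \<in> l2" by (rule phi_l2)
  next
    show "l2_linear_op Mop" by (rule lin)
    show "l2_indefinite Mop" by (rule ind)
    show "l2_adjoint Mop Mop" by (rule adj)
  next
    fix u :: "nat \<Rightarrow> real" show "Mop (Mop u) = u" by (rule Mop_Mop)
  next
    fix w x assume w: "w \<in> unit_ball d" and x: "x \<in> unit_ball d"
    have hx: "Hmat x \<in> unit_ball d" by (rule Hmat_ball[OF x])
    have "(\<lambda>n. phi d w n * ((-1) ^ fst (enum n) * phi d (Hmat x) n)) sums ser (-1) (dotp d w (Hmat x))"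
      by (rule core_sums) (use ball_bound[OF w hx] in auto)
    hence "l2_inner (phi d w) (Mop (phi d (Hmat x))) = ser (-1) (dotp d w (Hmat x))"
      unfolding l2_inner_def Mop_def by (simp add: sums_iff)
    also have "\<dots> = arsinh (dotp d w (Hmat x))"
      by (rule arsinh_ser[symmetric]) (rule dot_bound[OF w hx])
    finally show "arsinh (dotp d w (Hmat x)) = l2_inner (phi d w) (Mop (phi d (Hmat x)))" by simp
  qed
qed

end
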